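(* Let $G\curvearrowright X$ be a Borel action of a countable group on a standard Borel space. If for every $x\in X$ the stabilizer $\mathrm{Stab}_G(x)$ is uniformly coamenable in $G$, then the orbit equivalence relation $E_G^X$ is Borel amenable.
   Context: For a set $A$, $\mathrm{Prob}(A)$ is the set of nonnegative $p\in\ell^1(A)$ with $\|p\|_1=1$. For an action $G\curvearrowright Y$, $p\in\mathrm{Prob}(G)$ and $y\in Y$, $py\in\mathrm{Prob}(G\cdot y)$ denotes the pushforward of $p$ under $g\mapsto gy$. Given a finite $S\subseteq G$ and $\varepsilon>0$, an $(S,\varepsilon)$-Reiter function for $G\curvearrowright Y$ is some $p\in\mathrm{Prob}(G)$ such that $\|py-psy\|_1<\varepsilon$ for all $s\in S$ and all $y\in Y$. A subgroup $H\le G$ is uniformly coamenable if for every finite $S\subseteq G$ and every $\varepsilon>0$ the action $G\curvearrowright G/H$ has an $(S,\varepsilon)$-Reiter function. A CBER $E$ on $X$ is Borel amenable if there is a sequence $(p_i)_{i\in\mathbb N}$, each $p_i$ assigning to every $x\in X$ some $p^x_i\in\mathrm{Prob}([x]_E)$, such that for every $(x,y)\in E$ and $\varepsilon>0$, for all but finitely many $i$, $\|p_i^x-p_i^y\|_1<\varepsilon$, and such that for each $i$ the map $E\to\mathbb R$, $(x,y)\mapsto p_i^x(\{y\})$ is Borel. *)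

theory Defs
  imports "HOL-Analysis.Analysis"
begin

definition prob_on :: "'a set \<Rightarrow> ('a \<Rightarrow> real) \<Rightarrow> bool" where
  "prob_on A p \<longleftrightarrow> (\<forall>z. 0 \<le> p z) \<and> (\<forall>z. z \<notin> A \<longrightarrow> p z = 0)
     \<and> p summable_on A \<and> (\<Sum>\<^sub>\<infinity> z\<in>A. p z) = 1"

definition l1dist :: "('a \<Rightarrow> real) \<Rightarrow> ('a \<Rightarrow> real) \<Rightarrow> real" where
  "l1dist f g = (\<Sum>\<^sub>\<infinity> z. \<bar>f z - g z\<bar>)"

definition pushfwd :: "('g \<Rightarrow> real) \<Rightarrow> ('g \<Rightarrow> 'y \<Rightarrow> 'y) \<Rightarrow> 'y \<Rightarrow> 'y \<Rightarrow> real" where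
  "pushfwd p b y w = (\<Sum>\<^sub>\<infinity> g\<in>{g. b g y = w}. p g)"

definition reiter_fn :: "('g \<Rightarrow> 'y \<Rightarrow> 'y) \<Rightarrow> 'y set \<Rightarrow> 'g set \<Rightarrow> real \<Rightarrow> ('g \<Rightarrow> real) \<Rightarrow> bool" where
  "reiter_fn b Y S eps p \<longleftrightarrow> prob_on UNIV p \<and>
     (\<forall>s\<in>S. \<forall>y\<in>Y. l1dist (pushfwd p b y) (pushfwd p b (b s y)) < eps)"

definition left_cosets :: "'g::group_add set \<Rightarrow> 'g set set" where
  "left_cosets H = {(\<lambda>k. g + k) ` H | g. True}"

definition coset_action :: "'g::group_add \<Rightarrow> 'g set \<Rightarrow> 'g set" where
  "coset_action g C = (\<lambda>k. g + k) ` C"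

definition uniformly_coamenable :: "'g::group_add set \<Rightarrow> bool" where
  "uniformly_coamenable H \<longleftrightarrow>
     (\<forall>S eps. finite S \<longrightarrow> eps > 0 \<longrightarrow>
        (\<exists>p. reiter_fn coset_action (left_cosets H) S eps p))"

definition borel_action :: "'x measure \<Rightarrow> ('g::group_add \<Rightarrow> 'x \<Rightarrow> 'x) \<Rightarrow> bool" where
  "borel_action M a \<longleftrightarrow>
     (\<forall>x\<in>space M. a 0 x = x) \<and>
     (\<forall>g h. \<forall>x\<in>space M. a (g + h) x = a g (a h x)) \<and>
     (\<forall>g. a g \<in> M \<rightarrow>\<^sub>M M)"

definition stabilizer :: "('g \<Rightarrow> 'x \<Rightarrow> 'x) \<Rightarrow> 'x \<Rightarrow> 'g set" where
  "stabilizer a x = {g. a g x = x}"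

definition orbit_eqrel :: "'x measure \<Rightarrow> ('g \<Rightarrow> 'x \<Rightarrow> 'x) \<Rightarrow> ('x \<times> 'x) set" where
  "orbit_eqrel M a = {(x, a g x) | x g. x \<in> space M}"

definition borel_amenable :: "'x measure \<Rightarrow> ('x \<times> 'x) set \<Rightarrow> bool" where
  "borel_amenable M E \<longleftrightarrow>
     (\<exists>p :: nat \<Rightarrow> 'x \<Rightarrow> 'x \<Rightarrow> real.
        (\<forall>i. \<forall>x\<in>space M. prob_on (E `` {x}) (p i x)) \<and>
        (\<forall>x y. (x, y) \<in> E \<longrightarrow>
           (\<forall>eps>0. eventually (\<lambda>i. l1dist (p i x) (p i y) < eps) sequentially)) \<and>
        (\<forall>i. (\<lambda>(x, y). p i x y) \<in> borel_measurable (restrict_space (M \<Otimes>\<^sub>M M) E)))"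

end

theory Submission
  imports Defs
begin

lemma summable_diff_r:
  fixes f g :: "'a \<Rightarrow> real"
  assumes "f summable_on A" "g summable_on A"
  shows "(\<lambda>x. f x - g x) summable_on A"
  using summable_on_add[OF assms(1) summable_on_uminus[THEN iffD2, OF assms(2)]] by simp

lemma infsum_diff_r:
  fixes f g :: "'a \<Rightarrow> real"
  assumes "f summable_on A" "g summable_on A"
  shows "infsum (\<lambda>x. f x - g x) A = infsum f A - infsum g A"
  using infsum_add[OF assms(1) summable_on_uminus[THEN iffD2, OF assms(2)]] infsum_uminus[of g A] by simp

lemma fiber_has_sum:
  fixes f :: "'g \<Rightarrow> real"
  assumes f: "f summable_on UNIV"
  shows "((\<lambda>w. infsum f {g. b g = w}) has_sum infsum f UNIV) UNIV"
proof -
  let ?S = "Sigma UNIV (\<lambda>w. {g. b g = w})"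
  have inj: "inj_on snd ?S" by (auto simp: inj_on_def)
  have im: "snd ` ?S = UNIV" by (auto simp: image_iff) 
  have "(f has_sum infsum f UNIV) (snd ` ?S)" using f im by (simp add: has_sum_infsum)
  then have "((f \<circ> snd) has_sum infsum f UNIV) ?S" using has_sum_reindex[OF inj] by blast
  moreover have "((\<lambda>g. (f \<circ> snd) (w, g)) has_sum infsum f {g. b g = w}) {g. b g = w}" for w
    using summable_on_subset_banach[OF f, of "{g. b g = w}"] by (simp add: has_sum_infsum)
  ultimately show ?thesis by (rule has_sum_Sigma')
qed

lemma push_abs:
  fixes f :: "'g \<Rightarrow> real"
  assumes f: "f summable_on UNIV"
  shows "(\<lambda>w. \<bar>infsum f {g. b g = w}\<bar>) summable_on UNIV"
    and "infsum (\<lambda>w. \<bar>infsum f {g. b g = w}\<bar>) UNIV \<le> infsum (\<lambda>g. \<bar>f g\<bar>) UNIV"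
proof -
  have fa: "(\<lambda>g. \<bar>f g\<bar>) summable_on UNIV"
    using f summable_on_iff_abs_summable_on_real by auto
  have h: "((\<lambda>w. infsum (\<lambda>g. \<bar>f g\<bar>) {g. b g = w}) has_sum infsum (\<lambda>g. \<bar>f g\<bar>) UNIV) UNIV"
    by (rule fiber_has_sum[OF fa])
  have le: "\<bar>infsum f {g. b g = w}\<bar> \<le> infsum (\<lambda>g. \<bar>f g\<bar>) {g. b g = w}" for w
  proof -
    have "(\<lambda>g. norm (f g)) summable_on {g. b g = w}"
      using summable_on_subset_banach[OF fa, of "{g. b g = w}"] by simp
    from norm_infsum_bound[OF this] show ?thesis by simp
  qed
  have s2: "(\<lambda>w. infsum (\<lambda>g. \<bar>f g\<bar>) {g. b g = w}) summable_on UNIV" using h by (auto simp: summable_on_def)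
  show s: "(\<lambda>w. \<bar>infsum f {g. b g = w}\<bar>) summable_on UNIV"
    using Infinite_Sum.abs_summable_on_comparison_test'[OF s2, of "\<lambda>w. infsum f {g. b g = w}"] le by simp
  show "infsum (\<lambda>w. \<bar>infsum f {g. b g = w}\<bar>) UNIV \<le> infsum (\<lambda>g. \<bar>f g\<bar>) UNIV"
    using infsum_mono[OF s s2 le] h infsumI by metis
qed

lemma abs_diff_summable:
  fixes u v :: "'a \<Rightarrow> real"
  assumes "u summable_on A" "v summable_on A"
  shows "(\<lambda>z. \<bar>u z - v z\<bar>) summable_on A"
  using summable_diff_r[OF assms] summable_on_iff_abs_summable_on_real[of "\<lambda>z. u z - v z" A] by simp

lemma l1_triangle:
  fixes u v w :: "'a \<Rightarrow> real"
  assumes "u summable_on UNIV" "v summable_on UNIV" "w summable_on UNIV"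
  shows "l1dist u w \<le> l1dist u v + l1dist v w"
proof -
  have "l1dist u w \<le> infsum (\<lambda>z. \<bar>u z - v z\<bar> + \<bar>v z - w z\<bar>) UNIV"
    unfolding l1dist_def
    by (rule infsum_mono) (auto intro!: abs_diff_summable summable_on_add assms)
  also have "\<dots> = l1dist u v + l1dist v w"
    unfolding l1dist_def by (rule infsum_add) (auto intro!: abs_diff_summable assms)
  finally show ?thesis .
qed

lemma push_summable:
  fixes p :: "'g \<Rightarrow> real"
  assumes "p summable_on UNIV"
  shows "pushfwd p b y summable_on UNIV"
  using fiber_has_sum[OF assms, of "\<lambda>g. b g y"] unfolding pushfwd_def[abs_def] summable_on_def by blast

lemma push_lip:
  fixes p q :: "'g \<Rightarrow> real"
  assumes p: "p summable_on UNIV" and q: "q summable_on UNIV"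
  shows "l1dist (pushfwd p b y) (pushfwd q b y) \<le> infsum (\<lambda>g. \<bar>p g - q g\<bar>) UNIV"
proof -
  have "pushfwd p b y w - pushfwd q b y w = infsum (\<lambda>g. p g - q g) {g. b g y = w}" for w
    unfolding pushfwd_def
    by (rule infsum_diff_r[symmetric]) (auto intro: summable_on_subset_banach[OF p] summable_on_subset_banach[OF q])
  then show ?thesis
    unfolding l1dist_def using push_abs(2)[OF summable_diff_r[OF p q], of "\<lambda>g. b g y"] by simp
qed

lemma push_inj:
  fixes p :: "'g \<Rightarrow> real" and f1 f2 :: "'g \<Rightarrow> 'u" and \<phi> :: "'u \<Rightarrow> 'v"
  assumes inj: "inj_on \<phi> (range f1 \<union> range f2)"
  shows "l1dist (\<lambda>w. infsum p {g. f1 g = w}) (\<lambda>w. infsum p {g. f2 g = w})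
       = l1dist (\<lambda>z. infsum p {g. \<phi> (f1 g) = z}) (\<lambda>z. infsum p {g. \<phi> (f2 g) = z})"
proof -
  let ?R = "range f1 \<union> range f2"
  let ?T1 = "\<lambda>w. \<bar>infsum p {g. f1 g = w} - infsum p {g. f2 g = w}\<bar>"
  let ?T2 = "\<lambda>z. \<bar>infsum p {g. \<phi> (f1 g) = z} - infsum p {g. \<phi> (f2 g) = z}\<bar>"
  have e1: "{g. f1 g = w} = {}" "{g. f2 g = w} = {}" if "w \<notin> ?R" for w using that by auto
  have e2: "{g. \<phi> (f1 g) = z} = {}" "{g. \<phi> (f2 g) = z} = {}" if "z \<notin> \<phi> ` ?R" for z using that by auto
  have "l1dist (\<lambda>w. infsum p {g. f1 g = w}) (\<lambda>w. infsum p {g. f2 g = w}) = infsum ?T1 ?R"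
    unfolding l1dist_def by (rule infsum_cong_neutral) (auto simp: e1)
  also have "\<dots> = infsum (?T2 \<circ> \<phi>) ?R"
  proof (rule infsum_cong)
    fix w assume w: "w \<in> ?R"
    have "{g. \<phi> (f1 g) = \<phi> w} = {g. f1 g = w}" "{g. \<phi> (f2 g) = \<phi> w} = {g. f2 g = w}"
      using inj w by (auto dest: inj_onD)
    then show "?T1 w = (?T2 \<circ> \<phi>) w" by simp
  qed
  also have "\<dots> = infsum ?T2 (\<phi> ` ?R)" by (rule infsum_reindex[OF inj, symmetric])
  also have "\<dots> = l1dist (\<lambda>z. infsum p {g. \<phi> (f1 g) = z}) (\<lambda>z. infsum p {g. \<phi> (f2 g) = z})"
    unfolding l1dist_def by (rule infsum_cong_neutral) (auto simp: e2)
  finally show ?thesis .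
qed

lemma coset_action_comp: "coset_action g (coset_action k H) = coset_action (g + k) (H::'g::group_add set)"
  unfolding coset_action_def by (auto simp: image_image add.assoc)

lemma coset_to_points:
  fixes a :: "'g::group_add \<Rightarrow> 'x \<Rightarrow> 'x" and p :: "'g \<Rightarrow> real"
  assumes a0: "\<And>x. a 0 x = x" and aa: "\<And>g h x. a (g + h) x = a g (a h x)"
  shows "l1dist (pushfwd p coset_action (coset_action k (stabilizer a x)))
                (pushfwd p coset_action (coset_action s (coset_action k (stabilizer a x))))
       = l1dist (pushfwd p a (a k x)) (pushfwd p a (a s (a k x)))"
proof -
  define H where "H = stabilizer a x"
  define \<phi> where "\<phi> C = a (SOME h. h \<in> C) x" for C
  have Hadd: "u + v \<in> H" if "u \<in> H" "v \<in> H" for u v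
    using that by (auto simp: H_def stabilizer_def aa)
  have \<phi>c: "\<phi> (coset_action k H) = a k x" for k
  proof -
    have ne: "\<exists>h. h \<in> coset_action k H" using a0 by (auto simp: coset_action_def H_def stabilizer_def)
    obtain h0 where "h0 \<in> H" "(SOME h. h \<in> coset_action k H) = k + h0"
      using someI_ex[OF ne] by (auto simp: coset_action_def)
    then show ?thesis by (simp add: \<phi>_def aa H_def stabilizer_def)
  qed
  have cos_eq: "coset_action k H = coset_action k' H" if "a k x = a k' x" for k k'
  proof -
    have "-k' + k \<in> H"
    proof -
      have "a (-k' + k) x = a (-k') (a k' x)" using that by (simp add: aa)
      also have "\<dots> = x" by (simp flip: aa add: a0)
      finally show ?thesis by (simp add: H_def stabilizer_def)
    qed
    moreover have "-k + k' \<in> H"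
    proof -
      have "a (-k + k') x = a (-k) (a k x)" using that by (simp add: aa)
      also have "\<dots> = x" by (simp flip: aa add: a0)
      finally show ?thesis by (simp add: H_def stabilizer_def)
    qed
    ultimately show ?thesis
      unfolding coset_action_def
      apply (auto simp: image_iff)
      apply (metis Hadd add.assoc add_minus_cancel)
      by (metis Hadd add.assoc add_minus_cancel)
  qed
  have inj: "inj_on \<phi> {coset_action k H | k. True}"
  proof (rule inj_onI)
    fix C D assume "C \<in> {coset_action k H | k. True}" "D \<in> {coset_action k H | k. True}" "\<phi> C = \<phi> D"
    then obtain k k' where "C = coset_action k H" "D = coset_action k' H" "a k x = a k' x" by (auto simp: \<phi>c)
    then show "C = D" using cos_eq by blast
  qed
  have "l1dist (pushfwd p coset_action (coset_action k H)) (pushfwd p coset_action (coset_action s (coset_action k H)))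
     = l1dist (\<lambda>z. infsum p {g. \<phi> (coset_action g (coset_action k H)) = z}) (\<lambda>z. infsum p {g. \<phi> (coset_action g (coset_action s (coset_action k H))) = z})"
    unfolding pushfwd_def[abs_def]
    by (rule push_inj, rule inj_on_subset[OF inj]) (auto simp: coset_action_comp)
  also have "\<dots> = l1dist (pushfwd p a (a k x)) (pushfwd p a (a s (a k x)))"
    unfolding pushfwd_def[abs_def] by (simp add: coset_action_comp \<phi>c aa)
  finally show ?thesis by (simp add: H_def)
qed

definition qL :: "('g \<times> rat) list \<Rightarrow> 'g \<Rightarrow> real" where
  "qL L g = (\<Sum>(h,r)\<leftarrow>L. if h = g then real_of_rat r else 0)"

lemma qL_map:
  assumes "distinct xs"
  shows "qL (map (\<lambda>h. (h, c h)) xs) g = (if g \<in> set xs then real_of_rat (c g) else 0)"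
  using assms by (induction xs) (auto simp: qL_def)

lemma qL_support: "qL L g \<noteq> 0 \<Longrightarrow> g \<in> fst ` set L"
  by (induction L) (auto simp: qL_def split: if_splits)

lemma finite_support_summable:
  fixes q :: "'g \<Rightarrow> real"
  assumes "finite F" "\<And>g. g \<notin> F \<Longrightarrow> q g = 0"
  shows "q summable_on A" "infsum q UNIV = sum q F"
proof -
  have "q summable_on UNIV"
    using summable_on_cong_neutral[of UNIV F q] assms by (auto intro: summable_on_finite)
  then show "q summable_on A" by (rule summable_on_subset_banach) auto
  have "infsum q UNIV = infsum q F" by (rule infsum_cong_neutral) (use assms in auto)
  then show "infsum q UNIV = sum q F" using assms by simp
qed

lemma approx_rat:
  fixes p :: "'g \<Rightarrow> real"
  assumes p: "prob_on UNIV p" and \<delta>: "\<delta> > 0"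
  shows "\<exists>L. prob_on UNIV (qL L) \<and> infsum (\<lambda>g. \<bar>p g - qL L g\<bar>) UNIV < \<delta>"
proof -
  define d where "d = min \<delta> 1"
  have d: "d > 0" "d \<le> 1" "d \<le> \<delta>" using \<delta> by (auto simp: d_def)
  have pnn: "\<And>g. p g \<ge> 0" and ps: "p summable_on UNIV" and p1: "infsum p UNIV = 1"
    using p by (auto simp: prob_on_def)
  obtain F where F: "finite F" "\<bar>sum p F - 1\<bar> \<le> d/8"
    using infsum_finite_approximation[OF ps, of "d/8"] d p1 by (auto simp: dist_real_def)
  define e where "e = d / (8 * (real (card F) + 1))"
  have e: "e > 0" using d by (simp add: e_def)
  have "\<forall>h. \<exists>c. p h < real_of_rat c \<and> real_of_rat c < p h + e"
  proof
    fix h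
    obtain r where "r \<in> \<rat>" "p h < r" "r < p h + e" using Rats_dense_in_real[of "p h" "p h + e"] e by auto
    then show "\<exists>c. p h < real_of_rat c \<and> real_of_rat c < p h + e" by (auto elim!: Rats_cases)
  qed
  then obtain c where c: "\<And>h. p h < real_of_rat (c h)" "\<And>h. real_of_rat (c h) < p h + e" by metis
  define r where "r h = real_of_rat (c h)" for h
  have rpos: "r h > 0" for h using c(1)[of h] pnn[of h] unfolding r_def by linarith
  have "(\<Sum>h\<in>F. \<bar>p h - r h\<bar>) \<le> (\<Sum>h\<in>F. e)"
  proof (rule sum_mono)
    fix h show "\<bar>p h - r h\<bar> \<le> e" using c(1)[of h] c(2)[of h] unfolding r_def by linarith
  qed
  also have "\<dots> \<le> d/8" using d by (simp add: e_def field_simps)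
  finally have pr: "(\<Sum>h\<in>F. \<bar>p h - r h\<bar>) \<le> d/8" .
  define \<sigma> where "\<sigma> = sum r F"
  have "\<bar>\<sigma> - sum p F\<bar> \<le> d/8"
    using pr sum_abs[of "\<lambda>h. p h - r h" F] unfolding \<sigma>_def sum_subtractf by linarith
  then have s1: "\<bar>\<sigma> - 1\<bar> \<le> d/4" using F(2) by linarith
  then have spos: "\<sigma> > 0" using d by linarith
  define c' where "c' h = c h / (\<Sum>k\<in>F. c k)" for h
  have rc': "real_of_rat (c' h) = r h / \<sigma>" for h
    by (simp add: c'_def \<sigma>_def r_def of_rat_divide of_rat_sum)
  obtain xs where xs: "set xs = F" "distinct xs" using finite_distinct_list[OF F(1)] by blast
  define L where "L = map (\<lambda>h. (h, c' h)) xs"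
  have q: "qL L g = (if g \<in> F then r g / \<sigma> else 0)" for g
    using qL_map[OF xs(2), of c' g] xs by (simp add: L_def rc')
  have qs: "qL L summable_on A" "infsum (qL L) UNIV = sum (qL L) F" for A
    using finite_support_summable[OF F(1), of "qL L"] by (auto simp: q)
  have "sum (qL L) F = sum (\<lambda>g. r g / \<sigma>) F" by (rule sum.cong) (auto simp: q)
  also have "\<dots> = 1" using spos by (simp add: \<sigma>_def sum_divide_distrib[symmetric])
  finally have q1: "infsum (qL L) UNIV = 1" using qs by simp
  have probq: "prob_on UNIV (qL L)"
    unfolding prob_on_def using qs q1 rpos spos by (auto simp: q less_imp_le)
  have sumdiff: "(\<lambda>g. \<bar>p g - qL L g\<bar>) summable_on A" for A
    by (rule abs_diff_summable) (auto intro: summable_on_subset_banach[OF ps] qs)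
  have "infsum (\<lambda>g. \<bar>p g - qL L g\<bar>) UNIV = infsum (\<lambda>g. \<bar>p g - qL L g\<bar>) (F \<union> (-F))" by simp
  also have "\<dots> = infsum (\<lambda>g. \<bar>p g - qL L g\<bar>) F + infsum (\<lambda>g. \<bar>p g - qL L g\<bar>) (-F)"
    by (rule infsum_Un_disjoint) (auto intro: sumdiff)
  also have "infsum (\<lambda>g. \<bar>p g - qL L g\<bar>) (-F) = infsum p (-F)"
    by (rule infsum_cong) (auto simp: q pnn)
  also have "infsum p (-F) = 1 - sum p F"
  proof -
    have "infsum p (F \<union> (-F)) = infsum p F + infsum p (-F)"
      by (rule infsum_Un_disjoint) (auto intro: summable_on_subset_banach[OF ps])
    then show ?thesis using p1 F(1) by simp
  qed
  also have "infsum (\<lambda>g. \<bar>p g - qL L g\<bar>) F = (\<Sum>h\<in>F. \<bar>p h - r h / \<sigma>\<bar>)"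
    using F(1) by (simp add: q)
  also have "(\<Sum>h\<in>F. \<bar>p h - r h / \<sigma>\<bar>) \<le> (\<Sum>h\<in>F. \<bar>p h - r h\<bar> + r h * \<bar>1 - 1/\<sigma>\<bar>)"
  proof (rule sum_mono)
    fix h
    have "\<bar>p h - r h / \<sigma>\<bar> \<le> \<bar>p h - r h\<bar> + \<bar>r h - r h / \<sigma>\<bar>" by linarith
    also have "\<bar>r h - r h / \<sigma>\<bar> = r h * \<bar>1 - 1/\<sigma>\<bar>"
    proof -
      have "r h - r h / \<sigma> = r h * (1 - 1/\<sigma>)" by (simp add: right_diff_distrib)
      then show ?thesis using rpos[of h] by (simp add: abs_mult)
    qed
    finally show "\<bar>p h - r h / \<sigma>\<bar> \<le> \<bar>p h - r h\<bar> + r h * \<bar>1 - 1/\<sigma>\<bar>" .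
  qed
  also have "(\<Sum>h\<in>F. \<bar>p h - r h\<bar> + r h * \<bar>1 - 1/\<sigma>\<bar>) = (\<Sum>h\<in>F. \<bar>p h - r h\<bar>) + \<sigma> * \<bar>1 - 1/\<sigma>\<bar>"
    by (simp add: sum.distrib \<sigma>_def sum_distrib_right)
  also have "\<sigma> * \<bar>1 - 1/\<sigma>\<bar> = \<bar>\<sigma> - 1\<bar>"
  proof -
    have "\<sigma> * (1 - 1/\<sigma>) = \<sigma> - 1" using spos by (simp add: right_diff_distrib)
    then show ?thesis using spos by (metis abs_mult abs_of_pos)
  qed
  finally have "infsum (\<lambda>g. \<bar>p g - qL L g\<bar>) UNIV \<le> d/8 + d/4 + (1 - sum p F)"
    using pr s1 by linarith
  also have "\<dots> \<le> d/2" using F(2) by linarith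
  also have "\<dots> < \<delta>" using d by linarith
  finally show ?thesis using probq by blast
qed

lemma infsum_fin_fiber:
  fixes q :: "'g \<Rightarrow> real"
  assumes F: "finite F" and q0: "\<And>g. g \<notin> F \<Longrightarrow> q g = 0"
  shows "infsum q {g. P g} = (\<Sum>h\<in>F. q h * (if P h then 1 else 0))"
proof -
  have "infsum q {g. P g} = infsum q {g\<in>F. P g}" by (rule infsum_cong_neutral) (use q0 in auto)
  also have "\<dots> = sum q {g\<in>F. P g}" using F by simp
  also have "\<dots> = (\<Sum>h\<in>F. q h * (if P h then 1 else 0))" using F by (simp add: sum.inter_filter if_distrib cong: if_cong)
  finally show ?thesis .
qed

lemma l1_fin:
  fixes q :: "'g::group_add \<Rightarrow> real" and b :: "'g \<Rightarrow> 'x" and k t :: 'g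
  assumes F: "finite F" and q0: "\<And>g. g \<notin> F \<Longrightarrow> q g = 0"
  defines "J \<equiv> (\<lambda>h. h + k) ` F \<union> (\<lambda>h. h + t) ` F"
  shows "l1dist (\<lambda>w. infsum q {g. b (g + k) = w}) (\<lambda>w. infsum q {g. b (g + t) = w})
    = (\<Sum>j\<in>J. \<bar>(\<Sum>h\<in>F. q h * (if b (h+k) = b j then 1 else 0)) - (\<Sum>h\<in>F. q h * (if b (h+t) = b j then 1 else 0))\<bar>
          / (\<Sum>j'\<in>J. if b j' = b j then 1 else 0))"
proof -
  define T where "T z = \<bar>(\<Sum>h\<in>F. q h * (if b (h+k) = z then 1 else 0)) - (\<Sum>h\<in>F. q h * (if b (h+t) = z then 1 else 0))\<bar>" for z
  have J: "finite J" using F by (simp add: J_def)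
  have "l1dist (\<lambda>w. infsum q {g. b (g + k) = w}) (\<lambda>w. infsum q {g. b (g + t) = w}) = infsum T UNIV"
    unfolding l1dist_def T_def by (simp add: infsum_fin_fiber[OF F q0])
  also have "\<dots> = infsum T (b ` J)"
  proof (rule infsum_cong_neutral)
    fix z assume "z \<in> UNIV - b ` J"
    then have "b (h+k) \<noteq> z" "b (h+t) \<noteq> z" if "h \<in> F" for h using that by (auto simp: J_def)
    then show "T z = 0" unfolding T_def by simp
  qed auto
  also have "\<dots> = sum T (b ` J)" using J by simp
  also have "\<dots> = (\<Sum>j\<in>J. T (b j) / real (card {j'\<in>J. b j' = b j}))"
  proof -
    have "(\<Sum>j\<in>J. T (b j) / real (card {j'\<in>J. b j' = b j}))
        = (\<Sum>y\<in>b ` J. \<Sum>j\<in>{x\<in>J. b x = y}. T (b j) / real (card {j'\<in>J. b j' = b j}))"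
      by (rule sum.image_gen[OF J])
    also have "\<dots> = sum T (b ` J)"
    proof (rule sum.cong[OF refl])
      fix y assume y: "y \<in> b ` J"
      have ne: "card {x\<in>J. b x = y} \<noteq> 0" using y J by auto
      have "(\<Sum>j\<in>{x\<in>J. b x = y}. T (b j) / real (card {j'\<in>J. b j' = b j}))
          = (\<Sum>j\<in>{x\<in>J. b x = y}. T y / real (card {x\<in>J. b x = y}))"
        by (rule sum.cong) auto
      also have "\<dots> = T y" using ne by simp
      finally show "(\<Sum>j\<in>{x\<in>J. b x = y}. T (b j) / real (card {j'\<in>J. b j' = b j})) = T y" .
    qed
    finally show ?thesis by simp
  qed
  also have "\<dots> = (\<Sum>j\<in>J. T (b j) / (\<Sum>j'\<in>J. if b j' = b j then 1 else 0))"
  proof (rule sum.cong[OF refl])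
    fix j
    have "real (card {j'\<in>J. b j' = b j}) = (\<Sum>j'\<in>J. if b j' = b j then 1 else 0)"
      using J by (simp add: sum.If_cases Int_def conj_commute)
    then show "T (b j) / real (card {j'\<in>J. b j' = b j}) = T (b j) / (\<Sum>j'\<in>J. if b j' = b j then 1 else 0)" by simp
  qed
  finally show ?thesis unfolding T_def .
qed

definition Sset :: "nat \<Rightarrow> 'g::countable set" where "Sset i = from_nat ` {..i}"

definition valid :: "('g::{countable,group_add} \<Rightarrow> 'x \<Rightarrow> 'x) \<Rightarrow> nat \<Rightarrow> ('g \<times> rat) list \<Rightarrow> 'x \<Rightarrow> bool" where
  "valid a i L x \<longleftrightarrow> prob_on UNIV (qL L) \<and>
     (\<forall>s\<in>Sset i. \<forall>k. l1dist (pushfwd (qL L) a (a k x)) (pushfwd (qL L) a (a s (a k x))) < 1 / real (Suc i))"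

definition Phi :: "('g::group_add \<Rightarrow> 'x \<Rightarrow> 'x) \<Rightarrow> ('g \<times> rat) list \<Rightarrow> 'g \<Rightarrow> 'g \<Rightarrow> 'x \<Rightarrow> real" where
  "Phi a L s k x = (\<Sum>j\<in>(\<lambda>h. h + k) ` (fst ` set L) \<union> (\<lambda>h. h + (s + k)) ` (fst ` set L).
      \<bar>(\<Sum>h\<in>fst ` set L. qL L h * (if a (h+k) x = a j x then 1 else 0))
      - (\<Sum>h\<in>fst ` set L. qL L h * (if a (h+(s+k)) x = a j x then 1 else 0))\<bar>
          / (\<Sum>j'\<in>(\<lambda>h. h + k) ` (fst ` set L) \<union> (\<lambda>h. h + (s + k)) ` (fst ` set L). if a j' x = a j x then 1 else 0))"

lemma finite_Sset: "finite (Sset i)" by (simp add: Sset_def)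

context
  fixes a :: "'g::{group_add, countable} \<Rightarrow> 'x::polish_space \<Rightarrow> 'x"
  assumes a0: "\<And>x. a 0 x = x" and aa: "\<And>g h x. a (g + h) x = a g (a h x)"
    and am[measurable]: "\<And>g. a g \<in> borel_measurable borel"
begin

lemma l1_Phi: "l1dist (pushfwd (qL L) a (a k x)) (pushfwd (qL L) a (a s (a k x))) = Phi a L s k x"
proof -
  have "l1dist (pushfwd (qL L) a (a k x)) (pushfwd (qL L) a (a s (a k x)))
     = l1dist (\<lambda>w. infsum (qL L) {g. a (g + k) x = w}) (\<lambda>w. infsum (qL L) {g. a (g + (s + k)) x = w})"
    unfolding pushfwd_def[abs_def] by (simp add: aa)
  also have "\<dots> = Phi a L s k x"
    unfolding Phi_def
    by (rule l1_fin[where b = "\<lambda>j. a j x"]) (auto intro: qL_support)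
  finally show ?thesis .
qed

lemma Phi_meas[measurable]: "(\<lambda>x. Phi a L s k x) \<in> borel_measurable borel"
  unfolding Phi_def by measurable

lemma valid_pred[measurable]: "Measurable.pred borel (valid a i L)"
proof -
  have "valid a i L = (\<lambda>x. prob_on UNIV (qL L) \<and> (\<forall>s\<in>Sset i. \<forall>k. Phi a L s k x < 1 / real (Suc i)))"
    by (auto simp: valid_def l1_Phi fun_eq_iff)
  moreover have "Measurable.pred borel (\<lambda>x. prob_on UNIV (qL L) \<and> (\<forall>s\<in>Sset i. \<forall>k. Phi a L s k x < 1 / real (Suc i)))"
    using finite_Sset[of i] by measurable
  ultimately show ?thesis by simp
qed

lemma valid_orbit: "valid a i L x \<Longrightarrow> valid a i L (a g x)"
  unfolding valid_def by (auto simp flip: aa)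

lemma valid_orbit_iff: "valid a i L (a g x) \<longleftrightarrow> valid a i L x"
proof
  assume "valid a i L (a g x)"
  then have "valid a i L (a (-g) (a g x))" by (rule valid_orbit)
  then show "valid a i L x" by (simp flip: aa add: a0)
qed (rule valid_orbit)


lemma valid_exists:
  assumes uc: "uniformly_coamenable (stabilizer a x)"
  shows "\<exists>L. valid a i L x"
proof -
  define n where "n = real (Suc i)"
  have n: "n > 0" by (simp add: n_def)
  define H where "H = stabilizer a x"
  obtain p where p: "reiter_fn coset_action (left_cosets H) (Sset i) (1/(2*n)) p"
    using uc finite_Sset[of i] n unfolding uniformly_coamenable_def H_def by force
  have pp: "prob_on UNIV p" using p by (simp add: reiter_fn_def)
  have ps: "p summable_on UNIV" using pp by (simp add: prob_on_def)
  have rp: "l1dist (pushfwd p a (a k x)) (pushfwd p a (a s (a k x))) < 1/(2*n)" if s: "s \<in> Sset i" for s k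
  proof -
    have "coset_action k H \<in> left_cosets H" by (auto simp: left_cosets_def coset_action_def)
    then have "l1dist (pushfwd p coset_action (coset_action k H)) (pushfwd p coset_action (coset_action s (coset_action k H))) < 1/(2*n)"
      using p s unfolding reiter_fn_def by blast
    then show ?thesis using coset_to_points[of a p k x s, OF a0 aa] by (simp add: H_def)
  qed
  obtain L where L: "prob_on UNIV (qL L)" "infsum (\<lambda>g. \<bar>p g - qL L g\<bar>) UNIV < 1/(5*n)"
    using approx_rat[OF pp, of "1/(5*n)"] n by auto
  have qs: "qL L summable_on UNIV" using L by (simp add: prob_on_def)
  have "valid a i L x"
    unfolding valid_def
  proof (intro conjI ballI allI L(1))
    fix s k :: 'g assume s: "s \<in> Sset i"
    define y where "y = a k x"
    define y' where "y' = a s y"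
    have d1: "l1dist (pushfwd (qL L) a y) (pushfwd p a y) < 1/(5*n)"
      using push_lip[OF qs ps, of a y] L(2) by (simp add: abs_minus_commute)
    have d2: "l1dist (pushfwd p a y') (pushfwd (qL L) a y') < 1/(5*n)"
      using push_lip[OF ps qs, of a y'] L(2) by simp
    have d3: "l1dist (pushfwd p a y) (pushfwd p a y') < 1/(2*n)"
      using rp[OF s, of k] by (simp add: y_def y'_def)
    have "l1dist (pushfwd (qL L) a y) (pushfwd (qL L) a y')
       \<le> l1dist (pushfwd (qL L) a y) (pushfwd p a y) + l1dist (pushfwd p a y) (pushfwd (qL L) a y')"
      by (rule l1_triangle) (auto intro: push_summable qs ps)
    also have "l1dist (pushfwd p a y) (pushfwd (qL L) a y')
       \<le> l1dist (pushfwd p a y) (pushfwd p a y') + l1dist (pushfwd p a y') (pushfwd (qL L) a y')"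
      by (rule l1_triangle) (auto intro: push_summable qs ps)
    finally have "l1dist (pushfwd (qL L) a y) (pushfwd (qL L) a y') < 1/(5*n) + (1/(2*n) + 1/(5*n))"
      using d1 d2 d3 by linarith
    also have "\<dots> < 1/n" using n by (simp add: field_simps)
    finally show "l1dist (pushfwd (qL L) a (a k x)) (pushfwd (qL L) a (a s (a k x))) < 1 / real (Suc i)"
      by (simp add: y_def y'_def n_def)
  qed
  then show ?thesis by blast
qed

end

theorem lemma4p4:
  fixes a :: "'g::{group_add, countable} \<Rightarrow> 'x::polish_space \<Rightarrow> 'x"
  assumes "borel_action (borel :: 'x measure) a"
    and "\<forall>x. uniformly_coamenable (stabilizer a x)"
  shows "borel_amenable (borel :: 'x measure) (orbit_eqrel (borel :: 'x measure) a)"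
proof -
  have a0: "\<And>x. a 0 x = x" and aa: "\<And>g h x. a (g + h) x = a g (a h x)"
    and am: "\<And>g. a g \<in> borel_measurable borel"
    using assms(1) by (auto simp: borel_action_def)
  note am[measurable] valid_pred[OF a0 aa am, measurable]
  define E where "E = orbit_eqrel (borel :: 'x measure) a"
  have E: "E `` {x} = range (\<lambda>g. a g x)" for x by (auto simp: E_def orbit_eqrel_def)
  define N where "N i x = (LEAST n. valid a i (from_nat n) x)" for i x
  have exN: "\<exists>n. valid a i (from_nat n) x" for i x
  proof -
    obtain L where "valid a i L x" using valid_exists[OF a0 aa am] assms(2) by blast
    then show ?thesis by (metis from_nat_to_nat)
  qed
  have vN: "valid a i (from_nat (N i x)) x" for i x
    unfolding N_def by (rule LeastI_ex[OF exN])
  have Norb: "N i (a g x) = N i x" for i g x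
    unfolding N_def using valid_orbit_iff[OF a0 aa am] by simp
  define P where "P i x y = pushfwd (qL (from_nat (N i x))) a x y" for i x y
  show ?thesis
    unfolding borel_amenable_def E_def[symmetric]
  proof (intro exI[of _ P] conjI allI ballI impI)
    fix i x
    define q :: "'g \<Rightarrow> real" where "q = qL (from_nat (N i x))"
    have qp: "prob_on UNIV q" using vN[of i x] by (simp add: valid_def q_def)
    have qs: "q summable_on UNIV" and q1: "infsum q UNIV = 1" and qn: "\<And>g. q g \<ge> 0"
      using qp by (auto simp: prob_on_def)
    have hs: "((\<lambda>w. infsum q {g. a g x = w}) has_sum 1) UNIV"
      using fiber_has_sum[OF qs, of "\<lambda>g. a g x"] q1 by simp
    have zero: "infsum q {g. a g x = w} = 0" if "w \<notin> range (\<lambda>g. a g x)" for w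
    proof -
      have "{g. a g x = w} = {}" using that by auto
      then show ?thesis by simp
    qed
    have hs2: "((\<lambda>w. infsum q {g. a g x = w}) has_sum 1) (range (\<lambda>g. a g x))"
      using hs has_sum_cong_neutral[of "range (\<lambda>g. a g x)" UNIV "\<lambda>w. infsum q {g. a g x = w}" "\<lambda>w. infsum q {g. a g x = w}" 1]
        zero by auto
    show "prob_on (E `` {x}) (P i x)"
      unfolding prob_on_def E P_def pushfwd_def[abs_def] q_def[symmetric]
      using hs2 zero infsumI[OF hs2] by (auto intro!: infsum_nonneg qn simp: summable_on_def)
  next
    fix x y :: 'x and eps :: real
    assume xy: "(x, y) \<in> E" and eps: "eps > 0"
    obtain g where y: "y = a g x" using xy by (auto simp: E_def orbit_eqrel_def)
    obtain n0 where n0: "1 / real (Suc n0) < eps"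
      using reals_Archimedean[OF eps] by (auto simp: inverse_eq_divide)
    show "\<forall>\<^sub>F i in sequentially. l1dist (P i x) (P i y) < eps"
      unfolding eventually_sequentially
    proof (intro exI[of _ "max n0 (to_nat g)"] allI impI)
      fix i assume i: "max n0 (to_nat g) \<le> i"
      have gS: "g \<in> Sset i" using i by (auto simp: Sset_def image_iff intro!: bexI[of _ "to_nat g"])
      have v: "valid a i (from_nat (N i x)) x" by (rule vN)
      then have "l1dist (pushfwd (qL (from_nat (N i x))) a (a 0 x)) (pushfwd (qL (from_nat (N i x))) a (a g (a 0 x))) < 1 / real (Suc i)"
        using gS unfolding valid_def by blast
      then have "l1dist (P i x) (P i y) < 1 / real (Suc i)"
        by (simp add: P_def[abs_def] y Norb a0)
      also have "1 / real (Suc i) \<le> 1 / real (Suc n0)" using i by (simp add: frac_le)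
      finally show "l1dist (P i x) (P i y) < eps" using n0 by linarith
    qed
  next
    fix i
    have Nm: "(\<lambda>x. N i x) \<in> measurable borel (count_space UNIV)"
      unfolding N_def by (rule measurable_Least) (rule valid_pred[OF a0 aa am])
    have fm0: "(\<lambda>z. pushfwd (qL L) a (fst z) (snd z)) \<in> borel_measurable (borel \<Otimes>\<^sub>M borel)" for L :: "('g \<times> rat) list"
    proof -
      have q0: "\<And>g. g \<notin> fst ` set L \<Longrightarrow> qL L g = 0" using qL_support[of L] by blast
      have "(\<lambda>z. pushfwd (qL L) a (fst z) (snd z))
          = (\<lambda>z. \<Sum>h\<in>fst ` set L. (qL L h :: real) * (if a h (fst z) = snd z then 1 else 0))"
        unfolding pushfwd_def by (intro ext infsum_fin_fiber[OF _ q0]) auto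
      moreover have "(\<lambda>z. \<Sum>h\<in>fst ` set L. (qL L h :: real) * (if a h (fst z) = snd z then 1 else 0)) \<in> borel_measurable (borel \<Otimes>\<^sub>M borel)"
        by measurable
      ultimately show ?thesis by simp
    qed
    have fm: "(\<lambda>z. pushfwd (qL (from_nat n :: ('g \<times> rat) list)) a (fst z) (snd z)) \<in> borel_measurable (borel \<Otimes>\<^sub>M borel)" for n
      by (rule fm0)
    have "(\<lambda>z. pushfwd (qL (from_nat (N i (fst z)))) a (fst z) (snd z)) \<in> borel_measurable (borel \<Otimes>\<^sub>M borel)"
      by (rule measurable_compose_countable[OF fm]) (rule measurable_compose[OF measurable_fst Nm])
    then have "(\<lambda>(x, y). P i x y) \<in> borel_measurable (borel \<Otimes>\<^sub>M borel)"
      by (simp add: P_def case_prod_beta)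
    then show "(\<lambda>(x, y). P i x y) \<in> borel_measurable (restrict_space (borel \<Otimes>\<^sub>M borel) E)"
      by (rule measurable_restrict_space1)
  qed
qed

end
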